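(* Let $d\ge1$, $\lambda>0$, $\delta>0$, and let $f:\mathbb{R}^d\to\mathbb{R}$ satisfy: (A1) $f$ is continuous and has at least one minimizer; (A2) $\int_{\mathbb{R}^d}\exp(-f(y)/\delta)\,dy<+\infty$. Then for every $x\in\mathbb{R}^d$, \[\nabla^2f^{\lambda,\delta}(x)=\frac1\lambda I-\frac{1}{\lambda^2\delta}\Sigma_{\lambda,\delta}(x),\] where $\Sigma_{\lambda,\delta}(x):=\int_{\mathbb{R}^d}(y-\operatorname{zprox}^\delta_{\lambda,f}(x))(y-\operatorname{zprox}^\delta_{\lambda,f}(x))^\top d\mu_x(y)\succeq0$. In particular, if $\Sigma_{\lambda,\delta}(x)\preceq\lambda\delta I$, then $\nabla^2 f^{\lambda,\delta}(x)\succeq 0$ (i.e. $f^{\lambda,\delta}$ is convex at $x$).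
   Context: $\mu_x$ is the probability measure on $\mathbb{R}^d$ with density proportional to $\exp(-f(y)/\delta)\exp(-\|y-x\|^2/(2\lambda\delta))$; its mean is $\operatorname{zprox}^\delta_{\lambda,f}(x)=\dfrac{\mathbb{E}_{y\sim\mathcal N(x,\lambda\delta I)}[y\exp(-f(y)/\delta)]}{\mathbb{E}_{y\sim\mathcal N(x,\lambda\delta I)}[\exp(-f(y)/\delta)]}$. The soft Moreau envelope is $f^{\lambda,\delta}(x)=-\delta\log\mathbb{E}_{y\sim\mathcal N(x,\lambda\delta I)}[\exp(-f(y)/\delta)]$. *)

theory Defs
  imports "HOL-Analysis.Analysis"
begin

definition gauss_dens :: "real \<Rightarrow> real^'n \<Rightarrow> real^'n \<Rightarrow> real" where
  "gauss_dens s x y = (2 * pi * s) powr (- real CARD('n) / 2) * exp (- (norm (y - x))\<^sup>2 / (2 * s))"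

definition gauss_exp :: "real \<Rightarrow> real^'n \<Rightarrow> (real^'n \<Rightarrow> 'b::{banach,second_countable_topology}) \<Rightarrow> 'b" where
  "gauss_exp s x g = (LINT y|lborel. gauss_dens s x y *\<^sub>R g y)"

definition soft_moreau :: "(real^'n \<Rightarrow> real) \<Rightarrow> real \<Rightarrow> real \<Rightarrow> real^'n \<Rightarrow> real" where
  "soft_moreau f lam del x = - del * ln (gauss_exp (lam * del) x (\<lambda>y. exp (- f y / del)))"

definition zprox :: "(real^'n \<Rightarrow> real) \<Rightarrow> real \<Rightarrow> real \<Rightarrow> real^'n \<Rightarrow> real^'n" where
  "zprox f lam del x = gauss_exp (lam * del) x (\<lambda>y. exp (- f y / del) *\<^sub>R y)
                         /\<^sub>R gauss_exp (lam * del) x (\<lambda>y. exp (- f y / del))"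

text \<open>Unnormalized density of mu_x.\<close>
definition mu_dens :: "(real^'n \<Rightarrow> real) \<Rightarrow> real \<Rightarrow> real \<Rightarrow> real^'n \<Rightarrow> real^'n \<Rightarrow> real" where
  "mu_dens f lam del x y = exp (- f y / del) * exp (- (norm (y - x))\<^sup>2 / (2 * lam * del))"

definition outer :: "real^'n \<Rightarrow> real^'n \<Rightarrow> real^'n^'n" where
  "outer u v = (\<chi> i j. u $ i * v $ j)"

definition Sigma :: "(real^'n \<Rightarrow> real) \<Rightarrow> real \<Rightarrow> real \<Rightarrow> real^'n \<Rightarrow> real^'n^'n" where
  "Sigma f lam del x =
     (LINT y|lborel. mu_dens f lam del x y *\<^sub>R outer (y - zprox f lam del x) (y - zprox f lam del x))
       /\<^sub>R (LINT y|lborel. mu_dens f lam del x y)"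

definition psd :: "real^'n^'n \<Rightarrow> bool" where
  "psd A \<longleftrightarrow> (\<forall>v. 0 \<le> v \<bullet> (A *v v))"

end

theory Submission
  imports Defs
begin

lemma deriv_integral:
  fixes F :: "'a::euclidean_space \<Rightarrow> 'c \<Rightarrow> 'b::{banach,second_countable_topology}"
  assumes r: "r > 0"
  and der: "\<And>x y. x \<in> ball x0 r \<Longrightarrow> y \<in> space M \<Longrightarrow> ((\<lambda>x. F x y) has_derivative F' x y) (at x)"
  and bnd: "\<And>x y. x \<in> ball x0 r \<Longrightarrow> y \<in> space M \<Longrightarrow> onorm (F' x y) \<le> g y"
  and g: "integrable M g"
  and meas: "\<And>x. F x \<in> borel_measurable M"
  and meas': "\<And>h. (\<lambda>y. F' x0 y h) \<in> borel_measurable M"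
  and intF: "\<And>x. x \<in> ball x0 r \<Longrightarrow> integrable M (F x)"
  shows "((\<lambda>x. \<integral>y. F x y \<partial>M) has_derivative (\<lambda>h. \<integral>y. F' x0 y h \<partial>M)) (at x0)"
proof -
  have x0: "x0 \<in> ball x0 r" using r by simp
  have bl: "bounded_linear (F' x y)" if "x \<in> ball x0 r" "y \<in> space M" for x y
    using der[OF that] has_derivative_bounded_linear by blast
  have gpos: "0 \<le> g y" if "y \<in> space M" for y
    using bnd[OF x0 that] onorm_pos_le[OF bl[OF x0 that]] by linarith
  have intF': "integrable M (\<lambda>y. F' x0 y h)" for h
  proof -
    have i: "integrable M (\<lambda>y. g y * norm h)" using g by simp
    have ae: "AE y in M. norm (F' x0 y h) \<le> norm (g y * norm h)"
    proof (rule AE_I2)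
      fix y assume y: "y \<in> space M"
      have "norm (F' x0 y h) \<le> onorm (F' x0 y) * norm h" by (rule onorm[OF bl[OF x0 y]])
      also have "\<dots> \<le> g y * norm h" by (intro mult_right_mono bnd[OF x0 y]) auto
      also have "\<dots> \<le> norm (g y * norm h)" by simp
      finally show "norm (F' x0 y h) \<le> norm (g y * norm h)" .
    qed
    show ?thesis by (rule Bochner_Integration.integrable_bound[OF i meas' ae])
  qed
  have BL: "bounded_linear (\<lambda>h. \<integral>y. F' x0 y h \<partial>M)"
  proof (rule bounded_linear_intro[where K="\<integral>y. g y \<partial>M"])
    fix a b
    have "(\<integral>y. F' x0 y (a + b) \<partial>M) = (\<integral>y. F' x0 y a + F' x0 y b \<partial>M)"
      by (rule Bochner_Integration.integral_cong[OF refl]) (simp add: linear_simps bl[OF x0])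
    also have "\<dots> = (\<integral>y. F' x0 y a \<partial>M) + (\<integral>y. F' x0 y b \<partial>M)"
      by (intro Bochner_Integration.integral_add intF')
    finally show "(\<integral>y. F' x0 y (a + b) \<partial>M) = (\<integral>y. F' x0 y a \<partial>M) + (\<integral>y. F' x0 y b \<partial>M)" .
  next
    fix c a
    have "(\<integral>y. F' x0 y (c *\<^sub>R a) \<partial>M) = (\<integral>y. c *\<^sub>R F' x0 y a \<partial>M)"
      by (rule Bochner_Integration.integral_cong[OF refl]) (simp add: linear_simps bl[OF x0])
    then show "(\<integral>y. F' x0 y (c *\<^sub>R a) \<partial>M) = c *\<^sub>R (\<integral>y. F' x0 y a \<partial>M)" by simp
  next
    fix h
    have "norm (\<integral>y. F' x0 y h \<partial>M) \<le> (\<integral>y. norm (F' x0 y h) \<partial>M)"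
      by (rule integral_norm_bound)
    also have "\<dots> \<le> (\<integral>y. g y * norm h \<partial>M)"
    proof (rule Bochner_Integration.integral_mono)
      show "integrable M (\<lambda>y. norm (F' x0 y h))" using intF' by auto
      show "integrable M (\<lambda>y. g y * norm h)" using g by simp
      fix y assume y: "y \<in> space M"
      have "norm (F' x0 y h) \<le> onorm (F' x0 y) * norm h" by (rule onorm[OF bl[OF x0 y]])
      also have "\<dots> \<le> g y * norm h" by (intro mult_right_mono bnd[OF x0 y]) auto
      finally show "norm (F' x0 y h) \<le> g y * norm h" .
    qed
    also have "\<dots> = norm h * (\<integral>y. g y \<partial>M)" by (simp add: mult.commute)
    finally show "norm (\<integral>y. F' x0 y h \<partial>M) \<le> norm h * (\<integral>y. g y \<partial>M)" .
  qed
  define D where "D x y = (F x y - F x0 y - F' x0 y (x - x0)) /\<^sub>R norm (x - x0)" for x y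
  have Dbound: "norm (D x y) \<le> 2 * g y" if x: "x \<in> ball x0 r" and y: "y \<in> space M" for x y
  proof -
    have "norm (F x y - F x0 y - F' x0 y (x - x0)) \<le> norm (x - x0) * (2 * g y)"
    proof (rule differentiable_bound_linearization[where S="ball x0 r" and f="\<lambda>x. F x y" and f'="\<lambda>x. F' x y"])
      fix t :: real assume "t \<in> {0..1}"
      then show "x0 + t *\<^sub>R (x - x0) \<in> ball x0 r"
      proof -
        have t: "0 \<le> t" "t \<le> 1" using \<open>t \<in> {0..1}\<close> by auto
        have "dist x0 (x0 + t *\<^sub>R (x - x0)) = t * norm (x - x0)" using t by (simp add: dist_norm)
        also have "\<dots> \<le> norm (x - x0)" using t by (simp add: mult_left_le_one_le)
        also have "\<dots> < r" using x by (simp add: dist_norm norm_minus_commute)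
        finally show ?thesis by simp
      qed
    next
      fix z assume z: "z \<in> ball x0 r"
      show "((\<lambda>x. F x y) has_derivative F' z y) (at z within ball x0 r)"
        using der[OF z y] by (rule has_derivative_at_withinI)
      have "onorm (\<lambda>h. F' z y h + - F' x0 y h) \<le> onorm (F' z y) + onorm (\<lambda>h. - F' x0 y h)"
        by (intro onorm_triangle bl[OF z y] bounded_linear_minus bl[OF x0 y])
      also have "\<dots> \<le> 2 * g y" using bnd[OF z y] bnd[OF x0 y] by (simp add: onorm_neg)
      finally show "onorm (F' z y - F' x0 y) \<le> 2 * g y" by (simp add: fun_diff_def)
    qed (use x0 in auto)
    note * = this
    show ?thesis
    proof (cases "x = x0")
      case True then show ?thesis using gpos[OF y] by (simp add: D_def)
    next
      case False
      then have p: "norm (x - x0) > 0" by simp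
      have "norm (D x y) = norm (F x y - F x0 y - F' x0 y (x - x0)) / norm (x - x0)"
        by (simp add: D_def divide_inverse_commute)
      also have "\<dots> \<le> 2 * g y" using * p by (simp add: pos_divide_le_eq mult.commute)
      finally show ?thesis .
    qed
  qed
  have Dlim: "((\<lambda>x. D x y) \<longlongrightarrow> 0) (at x0)" if y: "y \<in> space M" for y
    using der[OF x0 y] unfolding has_derivative_at_within D_def by (simp add: diff_diff_eq)
  have Deq: "((\<integral>y. F x y \<partial>M) - (\<integral>y. F x0 y \<partial>M) - (\<integral>y. F' x0 y (x - x0) \<partial>M)) /\<^sub>R norm (x - x0)
     = (\<integral>y. D x y \<partial>M)" if x: "x \<in> ball x0 r" for x
    unfolding D_def using intF[OF x] intF[OF x0] intF' by simp
  have "((\<lambda>x. ((\<integral>y. F x y \<partial>M) - (\<integral>y. F x0 y \<partial>M) - (\<integral>y. F' x0 y (x - x0) \<partial>M)) /\<^sub>R norm (x - x0)) \<longlongrightarrow> 0) (at x0)"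
    unfolding tendsto_at_iff_sequentially
  proof (intro allI impI)
    fix X :: "nat \<Rightarrow> 'a" assume X: "\<forall>i. X i \<in> UNIV - {x0}" and XL: "X \<longlonglongrightarrow> x0"
    from XL r have "eventually (\<lambda>n. dist (X n) x0 < r) sequentially"
      by (rule tendstoD)
    then obtain N where N: "\<And>n. n \<ge> N \<Longrightarrow> X n \<in> ball x0 r"
      by (auto simp: eventually_sequentially dist_commute)
    have "(\<lambda>n. \<integral>y. D (X (n + N)) y \<partial>M) \<longlonglongrightarrow> (\<integral>y. 0 \<partial>M)"
    proof (rule integral_dominated_convergence[where w="\<lambda>y. 2 * g y"])
      show "(\<lambda>y. 0) \<in> borel_measurable M" by simp
      show "(\<lambda>y. D (X (n + N)) y) \<in> borel_measurable M" for n
        unfolding D_def by (intro borel_measurable_scaleR borel_measurable_diff meas meas' borel_measurable_const)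
      show "integrable M (\<lambda>y. 2 * g y)" using g by simp
      show "AE y in M. (\<lambda>n. D (X (n + N)) y) \<longlonglongrightarrow> 0"
      proof (rule AE_I2)
        fix y assume y: "y \<in> space M"
        have L1: "(\<lambda>n. X (n + N)) \<longlonglongrightarrow> x0" using XL by (rule LIMSEQ_ignore_initial_segment)
        have L2: "X (i + N) \<in> UNIV - {x0}" for i using X by auto
        have H: "\<forall>X. (\<forall>i. X i \<in> UNIV - {x0}) \<longrightarrow> X \<longlonglongrightarrow> x0 \<longrightarrow> ((\<lambda>x. D x y) \<circ> X) \<longlonglongrightarrow> 0"
          using Dlim[OF y] unfolding tendsto_at_iff_sequentially .
        show "(\<lambda>n. D (X (n + N)) y) \<longlonglongrightarrow> 0"
          using H[rule_format, OF L2 L1] by (simp add: comp_def)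
      qed
      show "AE y in M. norm (D (X (n + N)) y) \<le> 2 * g y" for n
        by (rule AE_I2, rule Dbound) (use N in auto)
    qed
    then have "(\<lambda>n. \<integral>y. D (X (n + N)) y \<partial>M) \<longlonglongrightarrow> 0" by simp
    show "((\<lambda>x. ((\<integral>y. F x y \<partial>M) - (\<integral>y. F x0 y \<partial>M) - (\<integral>y. F' x0 y (x - x0) \<partial>M)) /\<^sub>R norm (x - x0)) \<circ> X) \<longlonglongrightarrow> 0"
    proof (rule LIMSEQ_offset[where k=N])
      have "((\<lambda>x. ((\<integral>y. F x y \<partial>M) - (\<integral>y. F x0 y \<partial>M) - (\<integral>y. F' x0 y (x - x0) \<partial>M)) /\<^sub>R norm (x - x0)) \<circ> X) (n + N) = (\<integral>y. D (X (n + N)) y \<partial>M)" for n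
        unfolding comp_def by (rule Deq) (rule N, simp)
      then show "(\<lambda>n. ((\<lambda>x. ((\<integral>y. F x y \<partial>M) - (\<integral>y. F x0 y \<partial>M) - (\<integral>y. F' x0 y (x - x0) \<partial>M)) /\<^sub>R norm (x - x0)) \<circ> X) (n + N)) \<longlonglongrightarrow> 0"
        using \<open>(\<lambda>n. \<integral>y. D (X (n + N)) y \<partial>M) \<longlonglongrightarrow> 0\<close> by simp
    qed
  qed
  with BL show ?thesis
    unfolding has_derivative_at_within by (simp add: diff_diff_eq)
qed

lemma gauss_bounds:
  fixes t s :: real assumes t: "0 \<le> t" and s: "0 < s"
  shows "exp (- t\<^sup>2 / (2 * s)) \<le> 1" "exp (- t\<^sup>2 / (2 * s)) * t\<^sup>2 \<le> 2 * s"
    "exp (- t\<^sup>2 / (2 * s)) * t \<le> 1 + 2 * s"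
proof -
  define a where "a = t\<^sup>2 / (2 * s)"
  have a0: "0 \<le> a" using s by (simp add: a_def)
  have ea: "exp (- t\<^sup>2 / (2 * s)) = exp (- a)" by (simp add: a_def)
  show 1: "exp (- t\<^sup>2 / (2 * s)) \<le> 1" unfolding ea using a0 by simp
  have a: "t\<^sup>2 = 2 * s * a" using s by (simp add: a_def)
  have "1 + a \<le> exp a" by (rule exp_ge_add_one_self)
  then have "a \<le> exp a" by linarith
  then have "2 * s * a \<le> 2 * s * exp a" using s by (intro mult_left_mono) auto
  then have "t\<^sup>2 \<le> 2 * s * exp a" using a by simp
  then have "t\<^sup>2 / exp a \<le> 2 * s" by (simp add: pos_divide_le_eq)
  then show 2: "exp (- t\<^sup>2 / (2 * s)) * t\<^sup>2 \<le> 2 * s"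
  proof -
    have "exp (- a) * t\<^sup>2 = t\<^sup>2 / exp a" by (simp add: exp_minus field_simps)
    then show ?thesis using \<open>t\<^sup>2 / exp a \<le> 2 * s\<close> ea by simp
  qed
  have "0 \<le> (t - 1)\<^sup>2" by simp
  then have "t \<le> 1 + t\<^sup>2" unfolding power2_eq_square using t by (simp add: algebra_simps) 
  then have "exp (- t\<^sup>2 / (2 * s)) * t \<le> exp (- t\<^sup>2 / (2 * s)) * (1 + t\<^sup>2)"
    by (intro mult_left_mono) auto
  also have "\<dots> = exp (- t\<^sup>2 / (2 * s)) + exp (- t\<^sup>2 / (2 * s)) * t\<^sup>2"
    by (simp add: distrib_left)
  also have "\<dots> \<le> 1 + 2 * s" using 1 2 by linarith
  finally show "exp (- t\<^sup>2 / (2 * s)) * t \<le> 1 + 2 * s" .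
qed

locale sm =
  fixes f :: "real^'n \<Rightarrow> real" and lam del E :: real
  assumes lam: "lam > 0" and del: "del > 0" and fc: "continuous_on UNIV f"
    and Eb: "\<And>y. exp (- f y / del) \<le> E"
    and fin: "(\<integral>\<^sup>+ y. ennreal (exp (- f y / del)) \<partial>lborel) < \<infinity>"
begin

lemma w_cont: "continuous_on UNIV (\<lambda>y. exp (- f y / del))"
  using del by (intro continuous_intros fc) auto

lemma w_meas[measurable]: "(\<lambda>y. exp (- f y / del)) \<in> borel_measurable lborel"
  using w_cont by (simp add: borel_measurable_continuous_onI)

lemma w_int: "integrable lborel (\<lambda>y. exp (- f y / del))"
proof (rule integrableI_nonneg)
  show "(\<lambda>y. exp (- f y / del)) \<in> borel_measurable lborel" by (rule w_meas)
  show "(\<integral>\<^sup>+ y. ennreal (exp (- f y / del)) \<partial>lborel) < \<infinity>" by (rule fin)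
qed simp

lemma mu_eq: "mu_dens f lam del x y = exp (- f y / del) * exp (- (norm (y - x))\<^sup>2 / (2 * (lam * del)))"
  by (simp add: mu_dens_def mult.assoc)

lemma mu_pos: "0 < mu_dens f lam del x y"
  by (simp add: mu_dens_def)

lemma mu_cont: "continuous_on UNIV (\<lambda>y. mu_dens f lam del x y)"
  unfolding mu_dens_def using lam del by (intro continuous_intros fc) auto

lemma mu_meas[measurable]: "(\<lambda>y. mu_dens f lam del x y) \<in> borel_measurable lborel"
  using mu_cont by (simp add: borel_measurable_continuous_onI)

lemma mu_bound:
  assumes "0 \<le> C" "norm (q::real) \<le> C * (1 + (norm (y - x))\<^sup>2)"
  shows "mu_dens f lam del x y * norm q \<le> exp (- f y / del) * (C * (1 + 2 * (lam * del)))"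
proof -
  let ?t = "norm (y - x)" and ?s = "lam * del"
  have s: "?s > 0" using lam del by simp
  have e: "exp (- ?t\<^sup>2 / (2 * ?s)) * (1 + ?t\<^sup>2) \<le> 1 + 2 * ?s"
  proof -
    have "exp (- ?t\<^sup>2 / (2 * ?s)) * (1 + ?t\<^sup>2) = exp (- ?t\<^sup>2 / (2 * ?s)) + exp (- ?t\<^sup>2 / (2 * ?s)) * ?t\<^sup>2"
      by (simp add: distrib_left)
    also have "\<dots> \<le> 1 + 2 * ?s" using gauss_bounds(1,2)[OF norm_ge_zero s, of "y - x"] by linarith
    finally show ?thesis .
  qed
  have "mu_dens f lam del x y * norm q \<le> mu_dens f lam del x y * (C * (1 + ?t\<^sup>2))"
    using assms mu_pos[of x y] by (intro mult_left_mono) auto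
  also have "\<dots> = exp (- f y / del) * C * (exp (- ?t\<^sup>2 / (2 * ?s)) * (1 + ?t\<^sup>2))"
    by (simp add: mu_eq)
  also have "\<dots> \<le> exp (- f y / del) * C * (1 + 2 * ?s)"
    using e assms(1) by (intro mult_left_mono) auto
  finally show ?thesis by simp
qed

lemma int_mu:
  fixes q :: "real^'n \<Rightarrow> 'b::{banach,second_countable_topology}"
  assumes [measurable]: "q \<in> borel_measurable lborel"
    and qb: "\<And>y. norm (q y) \<le> C * (1 + (norm (y - x))\<^sup>2)"
  shows "integrable lborel (\<lambda>y. mu_dens f lam del x y *\<^sub>R q y)"
proof (rule Bochner_Integration.integrable_bound)
  have C: "0 \<le> C" using qb[of x] by simp (smt (verit) norm_ge_zero)
  show "integrable lborel (\<lambda>y. exp (- f y / del) * (C * (1 + 2 * (lam * del))))"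
    using w_int by simp
  show "(\<lambda>y. mu_dens f lam del x y *\<^sub>R q y) \<in> borel_measurable lborel" by measurable
  show "AE y in lborel. norm (mu_dens f lam del x y *\<^sub>R q y) \<le> norm (exp (- f y / del) * (C * (1 + 2 * (lam * del))))"
  proof (rule AE_I2)
    fix y
    have "norm (mu_dens f lam del x y *\<^sub>R q y) = mu_dens f lam del x y * norm (norm (q y))"
      using mu_pos[of x y] by simp
    also have "\<dots> \<le> exp (- f y / del) * (C * (1 + 2 * (lam * del)))"
      by (rule mu_bound[OF C]) (simp add: qb)
    also have "\<dots> \<le> norm (exp (- f y / del) * (C * (1 + 2 * (lam * del))))" by simp
    finally show "norm (mu_dens f lam del x y *\<^sub>R q y) \<le> norm (exp (- f y / del) * (C * (1 + 2 * (lam * del))))" .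
  qed
qed


lemma mu_deriv: "((\<lambda>x. mu_dens f lam del x y) has_derivative
   (\<lambda>h. mu_dens f lam del x y * (((y - x) \<bullet> h) / (lam * del)))) (at x)"
proof -
  have eq: "(\<lambda>x. mu_dens f lam del x y) = (\<lambda>x. exp (- f y / del) * exp (- ((y - x) \<bullet> (y - x)) / (2 * (lam * del))))"
    by (simp add: mu_eq power2_norm_eq_inner)
  show ?thesis unfolding eq
    apply (rule has_derivative_eq_rhs)
     apply (rule derivative_eq_intros refl)+
    using lam del apply (auto simp: mu_eq power2_norm_eq_inner inner_commute field_simps)
    done
qed


lemma et_bound: assumes "0 \<le> t" shows "exp (- t\<^sup>2 / (2 * (lam * del))) * (t * (1 + t)) \<le> 1 + 4 * (lam * del)"
proof -
  have s: "0 < lam * del" using lam del by simp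
  have "exp (- t\<^sup>2 / (2 * (lam * del))) * (t * (1 + t)) = exp (- t\<^sup>2 / (2 * (lam * del))) * t + exp (- t\<^sup>2 / (2 * (lam * del))) * t\<^sup>2"
    by (simp add: algebra_simps power2_eq_square)
  also have "\<dots> \<le> 1 + 4 * (lam * del)" using gauss_bounds(2,3)[OF assms s] by linarith
  finally show ?thesis .
qed

lemma K_deriv:
  fixes p :: "real^'n \<Rightarrow> 'b::{banach,second_countable_topology}"
  assumes pm[measurable]: "p \<in> borel_measurable lborel" and P: "\<And>y. norm (p y) \<le> P * (1 + norm y)"
  shows "((\<lambda>x. \<integral>y. mu_dens f lam del x y *\<^sub>R p y \<partial>lborel) has_derivative
     (\<lambda>h. \<integral>y. (mu_dens f lam del x0 y * (((y - x0) \<bullet> h) / (lam * del))) *\<^sub>R p y \<partial>lborel)) (at x0)"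
proof -
  have s: "0 < lam * del" using lam del by simp
  have P0: "0 \<le> P" using P[of 0] by simp (smt (verit) norm_ge_zero)
  define B where "B = P * (2 + norm x0) * (1 + 4 * (lam * del)) / (lam * del)"
  have pb: "norm (p y) \<le> P * (2 + norm x0) * (1 + norm (y - x))" if x: "x \<in> ball x0 1" for x y
  proof -
    have "norm y \<le> norm x + norm (y - x)" by (metis add.commute diff_add_cancel norm_triangle_ineq)
    moreover have "norm x \<le> norm x0 + 1" using x
      by (metis dist_norm mem_ball norm_minus_commute norm_triangle_sub add.commute add_le_cancel_left less_imp_le order_trans)
    ultimately have "1 + norm y \<le> (2 + norm x0) * (1 + norm (y - x))"
      by (simp add: algebra_simps) (smt (verit) mult_nonneg_nonneg norm_ge_zero)
    then have "P * (1 + norm y) \<le> P * ((2 + norm x0) * (1 + norm (y - x)))" using P0 by (intro mult_left_mono)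
    then show ?thesis using P[of y] by (simp add: mult.assoc)
  qed
  show ?thesis
  proof (rule deriv_integral[where r=1 and g = "\<lambda>y. exp (- f y / del) * B"])
    show "(0::real) < 1" by simp
    fix x y :: "real^'n" assume x: "x \<in> ball x0 1" and y: "y \<in> space lborel"
    show "((\<lambda>x. mu_dens f lam del x y *\<^sub>R p y) has_derivative (\<lambda>h. (mu_dens f lam del x y * (((y - x) \<bullet> h) / (lam * del))) *\<^sub>R p y)) (at x)"
      by (rule has_derivative_scaleR_left[OF mu_deriv])
    let ?t = "norm (y - x)"
    have "onorm (\<lambda>h. (mu_dens f lam del x y * (((y - x) \<bullet> h) / (lam * del))) *\<^sub>R p y) \<le> mu_dens f lam del x y * ?t * norm (p y) / (lam * del)"
    proof (rule onorm_le)
      fix h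
      have "norm ((mu_dens f lam del x y * (((y - x) \<bullet> h) / (lam * del))) *\<^sub>R p y)
          = mu_dens f lam del x y * \<bar>(y - x) \<bullet> h\<bar> * norm (p y) / (lam * del)"
        using mu_pos[of x y] s lam del by (simp add: abs_mult)
      also have "\<dots> \<le> mu_dens f lam del x y * (?t * norm h) * norm (p y) / (lam * del)"
        using mu_pos[of x y] s Cauchy_Schwarz_ineq2[of "y - x" h]
        by (intro divide_right_mono mult_right_mono mult_left_mono) auto
      finally show "norm ((mu_dens f lam del x y * (((y - x) \<bullet> h) / (lam * del))) *\<^sub>R p y) \<le> mu_dens f lam del x y * ?t * norm (p y) / (lam * del) * norm h"
        by (simp add: field_simps)
    qed
    also have "\<dots> \<le> mu_dens f lam del x y * ?t * (P * (2 + norm x0) * (1 + ?t)) / (lam * del)"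
      using pb[OF x, of y] mu_pos[of x y] s by (intro divide_right_mono mult_left_mono) auto
    also have "\<dots> = exp (- f y / del) * (exp (- ?t\<^sup>2 / (2 * (lam * del))) * (?t * (1 + ?t))) * (P * (2 + norm x0)) / (lam * del)"
      by (simp add: mu_eq field_simps)
    also have "\<dots> \<le> exp (- f y / del) * (1 + 4 * (lam * del)) * (P * (2 + norm x0)) / (lam * del)"
      using et_bound[of ?t] P0 s by (intro divide_right_mono mult_right_mono mult_left_mono) auto
    also have "\<dots> = exp (- f y / del) * B" by (simp add: B_def field_simps)
    finally show "onorm (\<lambda>h. (mu_dens f lam del x y * (((y - x) \<bullet> h) / (lam * del))) *\<^sub>R p y) \<le> exp (- f y / del) * B" .
  next
    show "integrable lborel (\<lambda>y. exp (- f y / del) * B)" using w_int by simp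
  next
    fix x :: "real^'n" show "(\<lambda>y. mu_dens f lam del x y *\<^sub>R p y) \<in> borel_measurable lborel" by measurable
  next
    fix h :: "real^'n" show "(\<lambda>y. (mu_dens f lam del x0 y * (((y - x0) \<bullet> h) / (lam * del))) *\<^sub>R p y) \<in> borel_measurable lborel"
      by measurable
  next
    fix x :: "real^'n" assume x: "x \<in> ball x0 1"
    show "integrable lborel (\<lambda>y. mu_dens f lam del x y *\<^sub>R p y)"
    proof (rule int_mu[where C = "2 * P * (2 + norm x0)"])
      fix y :: "real^'n"
      have t: "1 + norm (y - x) \<le> 2 * (1 + (norm (y - x))\<^sup>2)"
      proof -
        have "0 \<le> (norm (y - x) - 1)\<^sup>2" by simp
        then have "2 * norm (y - x) \<le> 1 + (norm (y - x))\<^sup>2" unfolding power2_eq_square by (simp add: algebra_simps)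
        then have "norm (y - x) \<le> 1 + (norm (y - x))\<^sup>2" using norm_ge_zero[of "y - x"] by linarith
        then show ?thesis by (smt (verit) zero_le_power2)
      qed
      have "norm (p y) \<le> P * (2 + norm x0) * (1 + norm (y - x))" by (rule pb[OF x])
      also have "\<dots> \<le> P * (2 + norm x0) * (2 * (1 + (norm (y - x))\<^sup>2))"
        using t P0 by (intro mult_left_mono) auto
      finally show "norm (p y) \<le> 2 * P * (2 + norm x0) * (1 + (norm (y - x))\<^sup>2)" by (simp add: algebra_simps)
    qed simp
  qed
qed

end

lemma sq_le_aux: "(a::real) \<le> b + c \<Longrightarrow> 0 \<le> a \<Longrightarrow> a\<^sup>2 \<le> 2 * b\<^sup>2 + 2 * c\<^sup>2"
  by (smt (verit) power2_diff power2_eq_square power_mono zero_le_power2 power2_sum)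

lemma lin_sq_aux: "0 \<le> (t::real) \<Longrightarrow> t \<le> 1 + t\<^sup>2"
proof -
  assume t: "0 \<le> t"
  have "0 \<le> (t - 1)\<^sup>2" by simp
  then have "2 * t \<le> 1 + t\<^sup>2" unfolding power2_eq_square by (simp add: algebra_simps)
  then show ?thesis using t by linarith
qed

lemma norm_outer: "norm (outer u v) = norm u * norm v"
proof -
  have "norm (outer u v) = L2_set (\<lambda>i. norm (outer u v $ i)) UNIV" by (simp add: norm_vec_def)
  also have "\<dots> = L2_set (\<lambda>i. norm v * \<bar>u $ i\<bar>) UNIV"
  proof (rule L2_set_cong[OF refl])
    fix i
    have "outer u v $ i = (u $ i) *\<^sub>R v" by (simp add: outer_def vec_eq_iff)
    then show "norm (outer u v $ i) = norm v * \<bar>u $ i\<bar>" by simp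
  qed
  also have "\<dots> = norm v * L2_set (\<lambda>i. \<bar>u $ i\<bar>) UNIV" by (simp add: L2_set_right_distrib)
  also have "L2_set (\<lambda>i. \<bar>u $ i\<bar>) UNIV = norm u" by (simp add: norm_vec_def)
  finally show ?thesis by simp
qed

lemma outer_mult: "outer u v *v h = (v \<bullet> h) *\<^sub>R u"
  by (simp add: outer_def vec_eq_iff matrix_vector_mult_def inner_vec_def sum_distrib_left sum_distrib_right ac_simps)

lemma outer_cont: "continuous_on UNIV (\<lambda>y. outer (y - v) (y - v))"
  unfolding outer_def by (intro continuous_intros)

context sm
begin

lemma int_poly:
  fixes q :: "real^'n \<Rightarrow> 'b::{banach,second_countable_topology}"
  assumes [measurable]: "q \<in> borel_measurable lborel"
    and qb: "\<And>y. norm (q y) \<le> A * (1 + (norm y)\<^sup>2)"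
  shows "integrable lborel (\<lambda>y. mu_dens f lam del x y *\<^sub>R q y)"
proof (rule int_mu[where C = "A * (2 + 2 * (norm x)\<^sup>2)"])
  fix y :: "real^'n"
  have A: "0 \<le> A" using qb[of 0] by simp (smt (verit) norm_ge_zero)
  have "norm y \<le> norm x + norm (y - x)" by (metis add.commute diff_add_cancel norm_triangle_ineq)
  then have "(norm y)\<^sup>2 \<le> 2 * (norm x)\<^sup>2 + 2 * (norm (y - x))\<^sup>2" by (rule sq_le_aux) simp
  then have "1 + (norm y)\<^sup>2 \<le> (2 + 2 * (norm x)\<^sup>2) * (1 + (norm (y - x))\<^sup>2)"
    by (simp add: algebra_simps) (smt (verit) mult_nonneg_nonneg zero_le_power2)
  then have "A * (1 + (norm y)\<^sup>2) \<le> A * ((2 + 2 * (norm x)\<^sup>2) * (1 + (norm (y - x))\<^sup>2))"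
    using A by (intro mult_left_mono)
  then show "norm (q y) \<le> A * (2 + 2 * (norm x)\<^sup>2) * (1 + (norm (y - x))\<^sup>2)"
    using qb[of y] by (simp add: mult.assoc)
qed simp

lemma i0: "integrable lborel (\<lambda>y. mu_dens f lam del x y)"
  using int_poly[of "\<lambda>_. 1::real" 1 x] by simp

lemma i1: "integrable lborel (\<lambda>y. mu_dens f lam del x y *\<^sub>R y)"
  by (rule int_poly[where A=1]) (simp_all add: lin_sq_aux)

lemma i2: "integrable lborel (\<lambda>y. mu_dens f lam del x y *\<^sub>R (((y - v) \<bullet> h) *\<^sub>R y))"
proof (rule int_poly[where A="norm h * (1 + norm v)"])
  fix y :: "real^'n"
  have "norm (((y - v) \<bullet> h) *\<^sub>R y) = \<bar>(y - v) \<bullet> h\<bar> * norm y" by simp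
  also have "\<dots> \<le> (norm y + norm v) * norm h * norm y"
  proof (intro mult_right_mono)
    have "\<bar>(y - v) \<bullet> h\<bar> \<le> norm (y - v) * norm h" by (rule Cauchy_Schwarz_ineq2)
    also have "\<dots> \<le> (norm y + norm v) * norm h" by (intro mult_right_mono norm_triangle_ineq4) auto
    finally show "\<bar>(y - v) \<bullet> h\<bar> \<le> (norm y + norm v) * norm h" .
  qed simp
  also have "\<dots> = norm h * ((norm y)\<^sup>2 + norm v * norm y)" by (simp add: algebra_simps power2_eq_square)
  also have "\<dots> \<le> norm h * ((1 + norm v) * (1 + (norm y)\<^sup>2))"
  proof (rule mult_left_mono)
    have "norm v * norm y \<le> norm v * (1 + (norm y)\<^sup>2)" by (intro mult_left_mono lin_sq_aux) auto
    then show "(norm y)\<^sup>2 + norm v * norm y \<le> (1 + norm v) * (1 + (norm y)\<^sup>2)"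
      by (simp add: algebra_simps)
  qed simp
  finally show "norm (((y - v) \<bullet> h) *\<^sub>R y) \<le> norm h * (1 + norm v) * (1 + (norm y)\<^sup>2)" by (simp add: mult.assoc)
qed simp

lemma i3: "integrable lborel (\<lambda>y. mu_dens f lam del x y *\<^sub>R outer (y - v) (y - v))"
proof (rule int_poly[where A="2 + 2 * (norm v)\<^sup>2"])
  show "(\<lambda>y. outer (y - v) (y - v)) \<in> borel_measurable lborel"
    using outer_cont[of v] by (simp add: borel_measurable_continuous_onI)
  fix y :: "real^'n"
  have "norm (y - v) \<le> norm y + norm v" by (rule norm_triangle_ineq4)
  then have "(norm (y - v))\<^sup>2 \<le> 2 * (norm y)\<^sup>2 + 2 * (norm v)\<^sup>2" by (rule sq_le_aux) simp
  then show "norm (outer (y - v) (y - v)) \<le> (2 + 2 * (norm v)\<^sup>2) * (1 + (norm y)\<^sup>2)"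
    by (simp add: norm_outer power2_eq_square[symmetric] algebra_simps)
      (smt (verit) mult_nonneg_nonneg zero_le_power2)
qed

end

context sm
begin

definition "NN x = (\<integral>y. mu_dens f lam del x y \<partial>lborel)"
definition "MM x = (\<integral>y. mu_dens f lam del x y *\<^sub>R y \<partial>lborel)"
definition "JJ x h = (\<integral>y. (mu_dens f lam del x y * ((y - x) \<bullet> h)) *\<^sub>R y \<partial>lborel)"
definition "cc = (2 * pi * (lam * del)) powr (- real CARD('n) / 2)"

lemma cc_pos: "0 < cc"
  unfolding cc_def using lam del by simp

lemma NN_pos: "0 < NN x"
proof -
  have "0 \<le> NN x" unfolding NN_def
    by (intro Bochner_Integration.integral_nonneg) (simp add: less_imp_le[OF mu_pos])
  moreover have "NN x \<noteq> 0"
  proof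
    assume "NN x = 0"
    then have a1: "AE y in lborel. mu_dens f lam del x y = 0"
      using integral_nonneg_eq_0_iff_AE[OF i0[of x]] mu_pos by (simp add: NN_def less_imp_le)
    have a2: "AE y in lborel. mu_dens f lam del x y = 0 \<longrightarrow> False"
      using mu_pos[of x] by (intro AE_I2) (metis less_irrefl)
    have "AE y in (lborel :: (real^'n) measure). False" using AE_mp[OF a1 a2] .
    then show False using AE_iff_measurable[of "UNIV::(real^'n) set" lborel "\<lambda>_. False"] by simp
  qed
  ultimately show ?thesis by simp
qed

lemma ge_w: "gauss_exp (lam * del) x (\<lambda>y. exp (- f y / del)) = cc * NN x"
proof -
  have "gauss_exp (lam * del) x (\<lambda>y. exp (- f y / del)) = (\<integral>y. cc * mu_dens f lam del x y \<partial>lborel)"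
    unfolding gauss_exp_def gauss_dens_def
    by (rule Bochner_Integration.integral_cong) (simp_all add: mu_eq cc_def)
  then show ?thesis by (simp add: NN_def)
qed

lemma ge_wy: "gauss_exp (lam * del) x (\<lambda>y. exp (- f y / del) *\<^sub>R y) = cc *\<^sub>R MM x"
proof -
  have "gauss_exp (lam * del) x (\<lambda>y. exp (- f y / del) *\<^sub>R y) = (\<integral>y. cc *\<^sub>R (mu_dens f lam del x y *\<^sub>R y) \<partial>lborel)"
    unfolding gauss_exp_def gauss_dens_def
    by (rule Bochner_Integration.integral_cong) (simp_all add: mu_eq cc_def)
  also have "\<dots> = cc *\<^sub>R MM x" unfolding MM_def by (rule integral_scaleR_right)
  finally show ?thesis .
qed

lemma sm_eq: "soft_moreau f lam del x = - del * ln (cc * NN x)"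
  unfolding soft_moreau_def ge_w ..

lemma zprox_eq: "zprox f lam del x = inverse (NN x) *\<^sub>R MM x"
  unfolding zprox_def ge_w ge_wy using cc_pos by simp

lemma int_diff_x: "(\<integral>y. mu_dens f lam del x y *\<^sub>R (y - v) \<partial>lborel) = MM x - NN x *\<^sub>R v"
proof -
  have "(\<integral>y. mu_dens f lam del x y *\<^sub>R (y - v) \<partial>lborel) = (\<integral>y. mu_dens f lam del x y *\<^sub>R y - mu_dens f lam del x y *\<^sub>R v \<partial>lborel)"
    by (simp add: scaleR_diff_right)
  also have "\<dots> = MM x - (\<integral>y. mu_dens f lam del x y *\<^sub>R v \<partial>lborel)"
    unfolding MM_def by (rule Bochner_Integration.integral_diff[OF i1]) (use i0 in simp)
  also have "(\<integral>y. mu_dens f lam del x y *\<^sub>R v \<partial>lborel) = NN x *\<^sub>R v"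
    unfolding NN_def by (rule integral_scaleR_left) (use i0 in simp)
  finally show ?thesis .
qed

lemma int_inner_x: "(\<integral>y. mu_dens f lam del x y * ((y - v) \<bullet> h) \<partial>lborel) = (MM x - NN x *\<^sub>R v) \<bullet> h"
proof -
  have int: "integrable lborel (\<lambda>y. mu_dens f lam del x y *\<^sub>R (y - v))"
    using Bochner_Integration.integrable_diff[OF i1[of x] integrable_scaleR_left[OF i0[of x], of v]]
    by (simp add: scaleR_diff_right)
  have "(\<integral>y. mu_dens f lam del x y * ((y - v) \<bullet> h) \<partial>lborel) = (\<integral>y. (mu_dens f lam del x y *\<^sub>R (y - v)) \<bullet> h \<partial>lborel)"
    by simp
  also have "\<dots> = (\<integral>y. mu_dens f lam del x y *\<^sub>R (y - v) \<partial>lborel) \<bullet> h"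
    by (rule integral_inner_left) (use int in simp)
  finally show ?thesis by (simp add: int_diff_x)
qed

lemma NN_deriv: "(NN has_derivative (\<lambda>h. ((MM x - NN x *\<^sub>R x) \<bullet> h) / (lam * del))) (at x)"
proof -
  have d: "((\<lambda>x. \<integral>y. mu_dens f lam del x y *\<^sub>R (1::real) \<partial>lborel) has_derivative
     (\<lambda>h. \<integral>y. (mu_dens f lam del x y * (((y - x) \<bullet> h) / (lam * del))) *\<^sub>R (1::real) \<partial>lborel)) (at x)"
    by (rule K_deriv[where P=1]) simp_all
  have e: "(\<integral>y. (mu_dens f lam del x y * (((y - x) \<bullet> h) / (lam * del))) *\<^sub>R (1::real) \<partial>lborel)
      = ((MM x - NN x *\<^sub>R x) \<bullet> h) / (lam * del)" for h
    using int_inner_x[of x x h] by simp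
  show ?thesis using d unfolding e by (simp add: NN_def[abs_def])
qed

lemma MM_deriv: "(MM has_derivative (\<lambda>h. (1 / (lam * del)) *\<^sub>R JJ x h)) (at x)"
proof -
  have d: "((\<lambda>x. \<integral>y. mu_dens f lam del x y *\<^sub>R y \<partial>lborel) has_derivative
     (\<lambda>h. \<integral>y. (mu_dens f lam del x y * (((y - x) \<bullet> h) / (lam * del))) *\<^sub>R y \<partial>lborel)) (at x)"
    by (rule K_deriv[where P=1]) simp_all
  have e: "(\<integral>y. (mu_dens f lam del x y * (((y - x) \<bullet> h) / (lam * del))) *\<^sub>R y \<partial>lborel)
      = (1 / (lam * del)) *\<^sub>R JJ x h" for h
  proof -
    have "(\<integral>y. (mu_dens f lam del x y * (((y - x) \<bullet> h) / (lam * del))) *\<^sub>R y \<partial>lborel)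
       = (\<integral>y. (1 / (lam * del)) *\<^sub>R ((mu_dens f lam del x y * ((y - x) \<bullet> h)) *\<^sub>R y) \<partial>lborel)"
      by (rule Bochner_Integration.integral_cong) auto
    also have "\<dots> = (1 / (lam * del)) *\<^sub>R JJ x h" unfolding JJ_def by (rule integral_scaleR_right)
    finally show ?thesis .
  qed
  show ?thesis using d unfolding e by (simp add: MM_def[abs_def])
qed

end

context sm
begin

lemma blin_mv: "bounded_linear (\<lambda>A::real^'n^'n. A *v h)"
proof -
  have "linear (\<lambda>A::real^'n^'n. A *v h)"
    by (rule linearI) (simp_all add: matrix_vector_mult_add_rdistrib scaleR_matrix_vector_assoc)
  then show ?thesis by (simp add: linear_conv_bounded_linear)
qed

lemma i4: "integrable lborel (\<lambda>y. mu_dens f lam del x y *\<^sub>R (y - v))"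
  using Bochner_Integration.integrable_diff[OF i1[of x] integrable_scaleR_left[OF i0[of x], of v]]
  by (simp add: scaleR_diff_right)

lemma i5: "integrable lborel (\<lambda>y. mu_dens f lam del x y * ((y - v) \<bullet> h))"
  using integrable_inner_left[of h lborel "\<lambda>y. mu_dens f lam del x y *\<^sub>R (y - v)", OF i4] by simp

lemma Sig_int: "integrable lborel (\<lambda>y. (mu_dens f lam del x y * ((y - v) \<bullet> h)) *\<^sub>R (y - v))"
proof -
  have "integrable lborel (\<lambda>y. (mu_dens f lam del x y *\<^sub>R outer (y - v) (y - v)) *v h)"
    by (rule integrable_bounded_linear[OF blin_mv i3])
  then show ?thesis
    by (simp add: scaleR_matrix_vector_assoc[symmetric] outer_mult)
qed

lemma Sig_mult: "Sigma f lam del x *v h =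
  inverse (NN x) *\<^sub>R (\<integral>y. (mu_dens f lam del x y * ((y - zprox f lam del x) \<bullet> h)) *\<^sub>R (y - zprox f lam del x) \<partial>lborel)"
proof -
  let ?m = "zprox f lam del x"
  have "(\<integral>y. mu_dens f lam del x y *\<^sub>R outer (y - ?m) (y - ?m) \<partial>lborel) *v h
      = (\<integral>y. (mu_dens f lam del x y *\<^sub>R outer (y - ?m) (y - ?m)) *v h \<partial>lborel)"
    by (rule integral_bounded_linear[OF blin_mv i3, symmetric])
  also have "\<dots> = (\<integral>y. (mu_dens f lam del x y * ((y - ?m) \<bullet> h)) *\<^sub>R (y - ?m) \<partial>lborel)"
    by (simp add: scaleR_matrix_vector_assoc[symmetric] outer_mult)
  finally have *: "(\<integral>y. mu_dens f lam del x y *\<^sub>R outer (y - ?m) (y - ?m) \<partial>lborel) *v h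
      = (\<integral>y. (mu_dens f lam del x y * ((y - ?m) \<bullet> h)) *\<^sub>R (y - ?m) \<partial>lborel)" .
  show ?thesis
    unfolding Sigma_def NN_def[symmetric]
    by (simp add: scaleR_matrix_vector_assoc[symmetric] *)
qed

lemma S_eq: "(\<integral>y. (mu_dens f lam del x y * ((y - zprox f lam del x) \<bullet> h)) *\<^sub>R (y - zprox f lam del x) \<partial>lborel)
  = JJ x h + ((x - zprox f lam del x) \<bullet> h) *\<^sub>R MM x"
proof -
  let ?m = "zprox f lam del x" and ?mu = "mu_dens f lam del x"
  have a: "integrable lborel (\<lambda>y. (?mu y * ((y - x) \<bullet> h)) *\<^sub>R y)" using i2[of x x h] by simp
  have b: "integrable lborel (\<lambda>y. ((x - ?m) \<bullet> h) *\<^sub>R (?mu y *\<^sub>R y))"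
    by (rule integrable_scaleR_right) (rule i1)
  have "(\<integral>y. (?mu y * ((y - ?m) \<bullet> h)) *\<^sub>R (y - ?m) \<partial>lborel)
    = (\<integral>y. ((?mu y * ((y - x) \<bullet> h)) *\<^sub>R y + ((x - ?m) \<bullet> h) *\<^sub>R (?mu y *\<^sub>R y)) - (?mu y * ((y - ?m) \<bullet> h)) *\<^sub>R ?m \<partial>lborel)"
    by (rule Bochner_Integration.integral_cong) (simp_all add: algebra_simps inner_diff_left)
  also have "\<dots> = (\<integral>y. (?mu y * ((y - x) \<bullet> h)) *\<^sub>R y + ((x - ?m) \<bullet> h) *\<^sub>R (?mu y *\<^sub>R y) \<partial>lborel) - (\<integral>y. (?mu y * ((y - ?m) \<bullet> h)) *\<^sub>R ?m \<partial>lborel)"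
  proof (rule Bochner_Integration.integral_diff)
    show "integrable lborel (\<lambda>y. (?mu y * ((y - x) \<bullet> h)) *\<^sub>R y + ((x - ?m) \<bullet> h) *\<^sub>R (?mu y *\<^sub>R y))"
      by (rule Bochner_Integration.integrable_add[OF a b])
    show "integrable lborel (\<lambda>y. (?mu y * ((y - ?m) \<bullet> h)) *\<^sub>R ?m)"
      by (rule integrable_scaleR_left) (rule i5)
  qed
  also have "(\<integral>y. (?mu y * ((y - x) \<bullet> h)) *\<^sub>R y + ((x - ?m) \<bullet> h) *\<^sub>R (?mu y *\<^sub>R y) \<partial>lborel)
     = JJ x h + ((x - ?m) \<bullet> h) *\<^sub>R MM x"
    unfolding JJ_def MM_def
    by (subst Bochner_Integration.integral_add[OF a b]) (rule arg_cong2[where f="(+)"], rule refl, rule integral_scaleR_right)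
  also have "(\<integral>y. (?mu y * ((y - ?m) \<bullet> h)) *\<^sub>R ?m \<partial>lborel) = 0"
  proof -
    have "(\<integral>y. (?mu y * ((y - ?m) \<bullet> h)) *\<^sub>R ?m \<partial>lborel) = (\<integral>y. ?mu y * ((y - ?m) \<bullet> h) \<partial>lborel) *\<^sub>R ?m"
      by (rule integral_scaleR_left) (rule i5)
    also have "(\<integral>y. ?mu y * ((y - ?m) \<bullet> h) \<partial>lborel) = (MM x - NN x *\<^sub>R ?m) \<bullet> h"
      by (rule int_inner_x)
    also have "MM x - NN x *\<^sub>R ?m = 0"
      using NN_pos[of x] by (simp add: zprox_eq)
    finally show ?thesis by simp
  qed
  finally show ?thesis by simp
qed

end

context sm
begin

definition "grad z = (1 / lam) *\<^sub>R (z - zprox f lam del z)"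

lemma grad_deriv0: "(grad has_derivative (\<lambda>h. (1 / lam) *\<^sub>R (h - (inverse (NN x) *\<^sub>R ((1 / (lam * del)) *\<^sub>R JJ x h)
    + (- (inverse (NN x) * (((MM x - NN x *\<^sub>R x) \<bullet> h) / (lam * del)) * inverse (NN x))) *\<^sub>R MM x)))) (at x)"
proof -
  have e: "grad = (\<lambda>z. (1 / lam) *\<^sub>R (z - inverse (NN z) *\<^sub>R MM z))"
    by (rule ext) (simp add: grad_def zprox_eq)
  have NZ: "NN x \<noteq> 0" using NN_pos[of x] by simp
  show ?thesis unfolding e
    by (intro has_derivative_scaleR_right has_derivative_diff has_derivative_ident has_derivative_scaleR
        Deriv.has_derivative_inverse[where f=NN, OF NZ] NN_deriv MM_deriv)
qed

lemma sm_deriv: "(soft_moreau f lam del has_derivative (\<lambda>h. grad z \<bullet> h)) (at z)"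
proof -
  have eqf: "soft_moreau f lam del = (\<lambda>z. - del * ln (cc * NN z))" by (rule ext) (rule sm_eq)
  have pos: "0 < cc * NN z" using cc_pos NN_pos[of z] by simp
  have d: "((\<lambda>z. - del * ln (cc * NN z)) has_derivative
     (\<lambda>h. - del * ((cc * (((MM z - NN z *\<^sub>R z) \<bullet> h) / (lam * del))) * inverse (cc * NN z)))) (at z)"
    by (intro has_derivative_mult_right has_derivative_ln[where g="\<lambda>z. cc * NN z", OF pos] NN_deriv)
  have "- del * ((cc * (((MM z - NN z *\<^sub>R z) \<bullet> h) / (lam * del))) * inverse (cc * NN z)) = grad z \<bullet> h" for h
    using cc_pos NN_pos[of z] lam del
    by (simp add: grad_def zprox_eq inner_diff_left field_simps)
  then show ?thesis unfolding eqf using d by simp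
qed


lemma grad_deriv: "(grad has_derivative (\<lambda>h. ((1 / lam) *\<^sub>R mat 1 - (1 / (lam\<^sup>2 * del)) *\<^sub>R Sigma f lam del x) *v h)) (at x)"
proof -
  have NZ: "NN x \<noteq> 0" using NN_pos[of x] by simp
  have "((1 / lam) *\<^sub>R mat 1 - (1 / (lam\<^sup>2 * del)) *\<^sub>R Sigma f lam del x) *v h
    = (1 / lam) *\<^sub>R (h - (inverse (NN x) *\<^sub>R ((1 / (lam * del)) *\<^sub>R JJ x h)
    + (- (inverse (NN x) * (((MM x - NN x *\<^sub>R x) \<bullet> h) / (lam * del)) * inverse (NN x))) *\<^sub>R MM x))" for h
  proof -
    have "((1 / lam) *\<^sub>R mat 1 - (1 / (lam\<^sup>2 * del)) *\<^sub>R Sigma f lam del x) *v h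
      = (1 / lam) *\<^sub>R h - (1 / (lam\<^sup>2 * del)) *\<^sub>R (inverse (NN x) *\<^sub>R (JJ x h + ((x - inverse (NN x) *\<^sub>R MM x) \<bullet> h) *\<^sub>R MM x))"
    proof -
      have sv: "Sigma f lam del x *v h = inverse (NN x) *\<^sub>R (JJ x h + ((x - inverse (NN x) *\<^sub>R MM x) \<bullet> h) *\<^sub>R MM x)"
        unfolding Sig_mult S_eq by (simp only: zprox_eq)
      show ?thesis
        by (simp add: matrix_vector_mult_diff_rdistrib scaleR_matrix_vector_assoc[symmetric] sv del: scaleR_scaleR)
    qed
    also have "\<dots> = (1 / lam) *\<^sub>R (h - (inverse (NN x) *\<^sub>R ((1 / (lam * del)) *\<^sub>R JJ x h)
    + (- (inverse (NN x) * (((MM x - NN x *\<^sub>R x) \<bullet> h) / (lam * del)) * inverse (NN x))) *\<^sub>R MM x))"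
      using NZ lam del
      by (simp add: vec_eq_iff inner_diff_left field_simps power2_eq_square)
    finally show ?thesis .
  qed
  then show ?thesis using grad_deriv0[of x] by simp
qed

lemma Sigma_psd: "psd (Sigma f lam del x)"
  unfolding psd_def
proof
  fix v :: "real^'n"
  let ?m = "zprox f lam del x"
  have "v \<bullet> (Sigma f lam del x *v v) = inverse (NN x) * (v \<bullet> (\<integral>y. (mu_dens f lam del x y * ((y - ?m) \<bullet> v)) *\<^sub>R (y - ?m) \<partial>lborel))"
    by (simp add: Sig_mult)
  also have "v \<bullet> (\<integral>y. (mu_dens f lam del x y * ((y - ?m) \<bullet> v)) *\<^sub>R (y - ?m) \<partial>lborel)
     = (\<integral>y. v \<bullet> ((mu_dens f lam del x y * ((y - ?m) \<bullet> v)) *\<^sub>R (y - ?m)) \<partial>lborel)"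
    by (rule integral_inner_right[symmetric]) (rule Sig_int)
  also have "\<dots> = (\<integral>y. mu_dens f lam del x y * ((y - ?m) \<bullet> v)\<^sup>2 \<partial>lborel)"
    by (rule Bochner_Integration.integral_cong) (simp_all add: power2_eq_square inner_commute)
  finally show "0 \<le> v \<bullet> (Sigma f lam del x *v v)"
    using NN_pos[of x] mu_pos
    by (simp add: Bochner_Integration.integral_nonneg less_imp_le)
qed

end

lemma psd_final:
  fixes S :: "real^'n^'n" assumes lam: "lam > 0" and del: "del > 0"
    and P: "psd ((lam * del) *\<^sub>R mat 1 - S)"
  shows "psd ((1 / lam) *\<^sub>R mat 1 - (1 / (lam\<^sup>2 * del)) *\<^sub>R S)"
  unfolding psd_def
proof
  fix v :: "real^'n"
  have "0 \<le> v \<bullet> (((lam * del) *\<^sub>R mat 1 - S) *v v)" using P by (simp add: psd_def)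
  then have "0 \<le> (1 / (lam\<^sup>2 * del)) * (v \<bullet> (((lam * del) *\<^sub>R mat 1 - S) *v v))"
    using lam del by simp
  also have "\<dots> = v \<bullet> (((1 / lam) *\<^sub>R mat 1 - (1 / (lam\<^sup>2 * del)) *\<^sub>R S) *v v)"
    using lam del
    by (simp add: matrix_vector_mult_diff_rdistrib scaleR_matrix_vector_assoc[symmetric]
        inner_diff_right field_simps power2_eq_square)
  finally show "0 \<le> v \<bullet> (((1 / lam) *\<^sub>R mat 1 - (1 / (lam\<^sup>2 * del)) *\<^sub>R S) *v v)" .
qed

theorem theorem12:
  fixes f :: "real^'n \<Rightarrow> real" and lam del :: real
  assumes "lam > 0" and "del > 0"
    and "continuous_on UNIV f"
    and "\<exists>xm. \<forall>y. f xm \<le> f y"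
    and "(\<integral>\<^sup>+ y. ennreal (exp (- f y / del)) \<partial>lborel) < \<infinity>"
  shows "\<forall>x. (\<exists>grad :: real^'n \<Rightarrow> real^'n.
              (\<forall>z. (soft_moreau f lam del has_derivative (\<lambda>h. grad z \<bullet> h)) (at z))
            \<and> (grad has_derivative
                 (\<lambda>h. ((1 / lam) *\<^sub>R mat 1 - (1 / (lam\<^sup>2 * del)) *\<^sub>R Sigma f lam del x) *v h)) (at x))
          \<and> psd (Sigma f lam del x)
          \<and> (psd ((lam * del) *\<^sub>R mat 1 - Sigma f lam del x) \<longrightarrow>
               psd ((1 / lam) *\<^sub>R mat 1 - (1 / (lam\<^sup>2 * del)) *\<^sub>R Sigma f lam del x))"
proof -
  obtain xm where xm: "\<And>y. f xm \<le> f y" using assms(4) by blast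
  have Eb: "exp (- f y / del) \<le> exp (- f xm / del)" for y
    using xm[of y] assms(2) by (simp add: divide_right_mono)
  interpret S: sm f lam del "exp (- f xm / del)"
    by unfold_locales (use assms Eb in auto)
  show ?thesis
  proof
    fix x :: "real^'n"
    show "(\<exists>grad :: real^'n \<Rightarrow> real^'n.
              (\<forall>z. (soft_moreau f lam del has_derivative (\<lambda>h. grad z \<bullet> h)) (at z))
            \<and> (grad has_derivative
                 (\<lambda>h. ((1 / lam) *\<^sub>R mat 1 - (1 / (lam\<^sup>2 * del)) *\<^sub>R Sigma f lam del x) *v h)) (at x))
          \<and> psd (Sigma f lam del x)
          \<and> (psd ((lam * del) *\<^sub>R mat 1 - Sigma f lam del x) \<longrightarrow>
               psd ((1 / lam) *\<^sub>R mat 1 - (1 / (lam\<^sup>2 * del)) *\<^sub>R Sigma f lam del x))"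
      using S.sm_deriv S.grad_deriv[of x] S.Sigma_psd[of x] psd_final[OF assms(1,2)] by blast
  qed
qed

end
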